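(* Let $W$ be a finite set of possible worlds and let $G=(2^W,\gg)$ and $G'=(2^W,\gg')$ be belief algebras on $W$. Then $G\cap G'=(2^W,\gg\cap\gg')$ is a belief algebra.
   Context: $R_W=\{(U,V)\mid U,V\subseteq W,\ U\cap V=\varnothing\}$. A belief algebra on $W$ is a pair $(2^W,\gg)$, $\gg$ a binary relation on $2^W$, such that for all $U,V,U_1,V_1,U_2,V_2\subseteq W$: (A0) $\gg\subseteq R_W$; (A1) $U\gg\varnothing$ iff $U\neq\varnothing$; (A2) if $U\gg V$ then not $V\gg U$; (A3) if $U_1\supseteq U$, $U\gg V$, $V\supseteq V_1$ and $U_1\cap V_1=\varnothing$, then $U_1\gg V_1$; (A4) if $U=U_1\cup V_1=U_2\cup V_2$, $U_1\gg V_1$ and $U_2\gg V_2$, then $U_1\cap U_2\gg V_1\cup V_2$. Relations are viewed as sets of pairs. *)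

theory Defs
  imports Main
begin

definition R_W :: "'a set \<Rightarrow> ('a set \<times> 'a set) set" where
  "R_W W = {(U, V). U \<subseteq> W \<and> V \<subseteq> W \<and> U \<inter> V = {}}"

definition belief_algebra :: "'a set \<Rightarrow> ('a set \<times> 'a set) set \<Rightarrow> bool" where
  "belief_algebra W gg \<longleftrightarrow>
     gg \<subseteq> R_W W \<and>
     (\<forall>U. U \<subseteq> W \<longrightarrow> ((U, {}) \<in> gg \<longleftrightarrow> U \<noteq> {})) \<and>
     (\<forall>U V. U \<subseteq> W \<longrightarrow> V \<subseteq> W \<longrightarrow> (U, V) \<in> gg \<longrightarrow> (V, U) \<notin> gg) \<and>
     (\<forall>U V U1 V1. U \<subseteq> W \<longrightarrow> V \<subseteq> W \<longrightarrow> U1 \<subseteq> W \<longrightarrow> V1 \<subseteq> W \<longrightarrow>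
        U1 \<supseteq> U \<longrightarrow> (U, V) \<in> gg \<longrightarrow> V \<supseteq> V1 \<longrightarrow> U1 \<inter> V1 = {} \<longrightarrow> (U1, V1) \<in> gg) \<and>
     (\<forall>U U1 V1 U2 V2. U \<subseteq> W \<longrightarrow> U1 \<subseteq> W \<longrightarrow> V1 \<subseteq> W \<longrightarrow> U2 \<subseteq> W \<longrightarrow> V2 \<subseteq> W \<longrightarrow>
        U = U1 \<union> V1 \<longrightarrow> U = U2 \<union> V2 \<longrightarrow> (U1, V1) \<in> gg \<longrightarrow> (U2, V2) \<in> gg \<longrightarrow>
        (U1 \<inter> U2, V1 \<union> V2) \<in> gg)"

end

theory Submission
  imports Defs
begin

theorem proposition1:
  fixes W :: "'a set" and gg gg' :: "('a set \<times> 'a set) set"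
  assumes "finite W"
    and "belief_algebra W gg"
    and "belief_algebra W gg'"
  shows "belief_algebra W (gg \<inter> gg')"
proof -
  note d = assms(2)[unfolded belief_algebra_def] and e = assms(3)[unfolded belief_algebra_def]
  note A = d[THEN conjunct1]
  note a1 = d[THEN conjunct2, THEN conjunct1, rule_format]
  note a2 = d[THEN conjunct2, THEN conjunct2, THEN conjunct1, rule_format]
  note a3 = d[THEN conjunct2, THEN conjunct2, THEN conjunct2, THEN conjunct1, rule_format]
  note a4 = d[THEN conjunct2, THEN conjunct2, THEN conjunct2, THEN conjunct2, rule_format]
  note b1 = e[THEN conjunct2, THEN conjunct1, rule_format]
  note b3 = e[THEN conjunct2, THEN conjunct2, THEN conjunct2, THEN conjunct1, rule_format]
  note b4 = e[THEN conjunct2, THEN conjunct2, THEN conjunct2, THEN conjunct2, rule_format]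
  show ?thesis
    unfolding belief_algebra_def
  proof (intro conjI allI impI)
    show "gg \<inter> gg' \<subseteq> R_W W" using A by (rule le_infI1)
  next
    fix U assume "U \<subseteq> W"
    then show "((U, {}) \<in> gg \<inter> gg') = (U \<noteq> {})" using a1[of U] b1[of U] by simp
  next
    fix U V assume "U \<subseteq> W" "V \<subseteq> W" "(U, V) \<in> gg \<inter> gg'"
    then show "(V, U) \<notin> gg \<inter> gg'" using a2[of U V] by simp
  next
    fix U V U1 V1 assume h: "U \<subseteq> W" "V \<subseteq> W" "U1 \<subseteq> W" "V1 \<subseteq> W" "U \<subseteq> U1"
      "(U, V) \<in> gg \<inter> gg'" "V1 \<subseteq> V" "U1 \<inter> V1 = {}"
    have "(U1, V1) \<in> gg" by (rule a3[OF h(1-5) IntD1[OF h(6)] h(7,8)])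
    moreover have "(U1, V1) \<in> gg'" by (rule b3[OF h(1-5) IntD2[OF h(6)] h(7,8)])
    ultimately show "(U1, V1) \<in> gg \<inter> gg'" by (rule IntI)
  next
    fix U U1 V1 U2 V2 assume h: "U \<subseteq> W" "U1 \<subseteq> W" "V1 \<subseteq> W" "U2 \<subseteq> W" "V2 \<subseteq> W"
      "U = U1 \<union> V1" "U = U2 \<union> V2" "(U1, V1) \<in> gg \<inter> gg'" "(U2, V2) \<in> gg \<inter> gg'"
    have "(U1 \<inter> U2, V1 \<union> V2) \<in> gg" by (rule a4[OF h(1-7) IntD1[OF h(8)] IntD1[OF h(9)]])
    moreover have "(U1 \<inter> U2, V1 \<union> V2) \<in> gg'" by (rule b4[OF h(1-7) IntD2[OF h(8)] IntD2[OF h(9)]])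
    ultimately show "(U1 \<inter> U2, V1 \<union> V2) \<in> gg \<inter> gg'" by (rule IntI)
  qed
qed

end
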